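(* In the setting of the context, suppose the step-size satisfies $\alpha\in(0,\overline{\alpha})$, where $$\overline{\alpha}=\min\left\{\frac{\sqrt{\Delta^2+4ns(1-\sigma)^2cd\epsilon l^2yy_-^2(l+ns)}-\Delta}{2cd\epsilon l^2yy_-^2(l+ns)},\ \frac{1}{nl}\right\},\qquad \Delta=nscd\epsilon ly_-(1-\sigma+\tau).$$ Then for all $k\ge0$: (a) with $\Gamma_1=\frac{1}{\gamma_1}\sqrt{(\alpha ly_-T)^2+(\alpha yl+2)^2(d\epsilon ly_-^2T)^2}\in(0,\infty)$ we have $\|H_k\|_2=\Gamma_1\gamma_1^k$; (b) there exist $0<\gamma_2<1$ and $0<\Gamma_2<\infty$ such that $\|G^k\|_2\le\Gamma_2\gamma_2^k$; (c) with $\gamma=\max\{\gamma_1,\gamma_2\}$ and $\Gamma=\Gamma_1\Gamma_2/\gamma$, for all $0\le r\le k-1$, $\|G^{k-r-1}H_r\|_2\le\Gamma\gamma^k$.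
   Context: Let $n,p\ge1$, $\mathcal{G}$ a strongly-connected directed graph on $\{1,\dots,n\}$, $\underline{A}=(a_{ij})\in\mathbb{R}^{n\times n}$ with $a_{ij}>0$ if $i$ is an out-neighbor of $j$ or $i=j$, $a_{ij}=0$ otherwise, and columns summing to $1$; $A=\underline{A}\otimes I_p$, $A_\infty=\lim_kA^k$; $\mathbf{y}_k=\underline{A}^k\mathbf{1}_n$, $Y_k=\mathrm{diag}(\mathbf{y}_k)\otimes I_p$, $Y_\infty=\lim_kY_k$. Let $l,s>0$ be the Lipschitz-gradient and strong-convexity constants of differentiable local functions $f_i:\mathbb{R}^p\to\mathbb{R}$ (i.e. $\|\nabla f_i(\mathbf{z}_1)-\nabla f_i(\mathbf{z}_2)\|_2\le l\|\mathbf{z}_1-\mathbf{z}_2\|_2$ and $f_i(\mathbf{z}_1)-f_i(\mathbf{z}_2)\le\nabla f_i(\mathbf{z}_1)^\top(\mathbf{z}_1-\mathbf{z}_2)-\frac s2\|\mathbf{z}_1-\mathbf{z}_2\|_2^2$). Constants: $\tau=\|A-I_{np}\|_2$, $\epsilon=\|I_{np}-A_\infty\|_2$, $\eta=\max(|1-n\alpha l|,|1-n\alpha s|)$, $y=\sup_k\|Y_k\|_2$, $y_-=\sup_k\|Y_k^{-1}\|_2$; $\gamma_1\in(0,1)$, $T\in(0,\infty)$ are constants with $\|Y_k-Y_\infty\|_2\le T\gamma_1^k$ for all $k\ge0$; $|||\cdot|||$ is a matrix norm on $\mathbb{R}^{np\times np}$ with compatible vector norm $\|\cdot\|$ such that $\sigma:=|||A-A_\infty|||<1$;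 $c,d>0$ satisfy $\|\mathbf{v}\|_2\le c\|\mathbf{v}\|$ and $\|\mathbf{v}\|\le d\|\mathbf{v}\|_2$. Matrices: $$G=\begin{bmatrix}\sigma&0&\alpha\\ \alpha cly_-&\eta&0\\ cd\epsilon ly_-(\tau+\alpha lyy_-)&\alpha d\epsilon l^2yy_-&\sigma+\alpha cd\epsilon ly_-\end{bmatrix},\quad H_k=\begin{bmatrix}0&0&0\\ \alpha ly_-T\gamma_1^{k-1}&0&0\\ (\alpha ly+2)d\epsilon ly_-^2T\gamma_1^{k-1}&0&0\end{bmatrix}.$$ $\|\cdot\|_2$ on matrices is the spectral norm. *)

theory Defs
  imports "HOL-Analysis.Analysis"
begin

definition spec_norm :: "real^'n^'n \<Rightarrow> real" where
  "spec_norm M = onorm (\<lambda>x. M *v x)"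

primrec matpow :: "real^'n^'n \<Rightarrow> nat \<Rightarrow> real^'n^'n" where
  "matpow M 0 = mat 1"
| "matpow M (Suc k) = M ** matpow M k"

definition eta_const :: "nat \<Rightarrow> real \<Rightarrow> real \<Rightarrow> real \<Rightarrow> real" where
  "eta_const n \<alpha> l s = max \<bar>1 - real n * \<alpha> * l\<bar> \<bar>1 - real n * \<alpha> * s\<bar>"

text \<open>The 3x3 matrix G (rows listed top to bottom); ym stands for y_-.\<close>
definition Gmat :: "nat \<Rightarrow> real \<Rightarrow> real \<Rightarrow> real \<Rightarrow> real \<Rightarrow> real \<Rightarrow> real \<Rightarrow> real
    \<Rightarrow> real \<Rightarrow> real \<Rightarrow> real \<Rightarrow> real^3^3" where
  "Gmat n \<alpha> l s \<sigma> \<tau> \<epsilon> y ym c d = vector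
     [vector [\<sigma>, 0, \<alpha>],
      vector [\<alpha> * c * l * ym, eta_const n \<alpha> l s, 0],
      vector [c * d * \<epsilon> * l * ym * (\<tau> + \<alpha> * l * y * ym),
              \<alpha> * d * \<epsilon> * l^2 * y * ym,
              \<sigma> + \<alpha> * c * d * \<epsilon> * l * ym]]"

text \<open>The 3x3 matrix H_k; gamma1^(k-1) is written gamma1^k / gamma1 so that H_0 is
  also covered (k >= 0 in the paper).\<close>
definition Hmat :: "real \<Rightarrow> real \<Rightarrow> real \<Rightarrow> real \<Rightarrow> real \<Rightarrow> real \<Rightarrow> real \<Rightarrow> real
    \<Rightarrow> nat \<Rightarrow> real^3^3" where
  "Hmat \<alpha> l y ym \<epsilon> d T \<gamma>1 k = vector
     [vector [0, 0, 0],
      vector [\<alpha> * l * ym * T * (\<gamma>1^k / \<gamma>1), 0, 0],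
      vector [(\<alpha> * l * y + 2) * d * \<epsilon> * l * ym^2 * T * (\<gamma>1^k / \<gamma>1), 0, 0]]"

definition Delta_const :: "nat \<Rightarrow> real \<Rightarrow> real \<Rightarrow> real \<Rightarrow> real \<Rightarrow> real \<Rightarrow> real \<Rightarrow> real \<Rightarrow> real \<Rightarrow> real" where
  "Delta_const n s c d \<epsilon> l ym \<sigma> \<tau> = real n * s * c * d * \<epsilon> * l * ym * (1 - \<sigma> + \<tau>)"

definition alpha_bar :: "nat \<Rightarrow> real \<Rightarrow> real \<Rightarrow> real \<Rightarrow> real \<Rightarrow> real \<Rightarrow> real \<Rightarrow> real
    \<Rightarrow> real \<Rightarrow> real \<Rightarrow> real" where
  "alpha_bar n l s \<sigma> \<tau> \<epsilon> y ym c d =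
     (let \<Delta> = Delta_const n s c d \<epsilon> l ym \<sigma> \<tau>;
          q = c * d * \<epsilon> * l^2 * y * ym^2 * (l + real n * s)
      in min ((sqrt (\<Delta>^2 + 4 * real n * s * (1 - \<sigma>)^2 * q) - \<Delta>) / (2 * q))
             (1 / (real n * l)))"

end

theory Submission imports Defs begin

lemma spec_norm_mult: "spec_norm (A ** B) \<le> spec_norm A * spec_norm (B::real^'n^'n)"
proof -
  have "(\<lambda>x. (A ** B) *v x) = (\<lambda>x. A *v x) \<circ> (\<lambda>x. B *v x)"
    by (auto simp: matrix_vector_mul_assoc)
  then show ?thesis unfolding spec_norm_def
    by (metis onorm_compose matrix_vector_mul_bounded_linear)
qed

lemma step_bound:
  fixes G :: "real^'n^'n" and v z :: "real^'n"
  assumes "\<forall>i j. 0 \<le> G$i$j" "\<forall>i. (G *v v)$i \<le> lam * v$i" "\<forall>i. \<bar>z$i\<bar> \<le> m * v$i" "m \<ge> 0"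
  shows "\<bar>(G *v z)$i\<bar> \<le> lam * m * v$i"
proof -
  have "\<bar>(G *v z)$i\<bar> = \<bar>\<Sum>j\<in>UNIV. G$i$j * z$j\<bar>" by (simp add: matrix_vector_mult_def)
  also have "\<dots> \<le> (\<Sum>j\<in>UNIV. \<bar>G$i$j * z$j\<bar>)" by (rule sum_abs)
  also have "\<dots> \<le> (\<Sum>j\<in>UNIV. G$i$j * (m * v$j))"
    by (rule sum_mono) (simp add: abs_mult assms(1) assms(3) mult_left_mono)
  also have "\<dots> = m * (G *v v)$i" by (simp add: matrix_vector_mult_def sum_distrib_left algebra_simps)
  also have "\<dots> \<le> m * (lam * v$i)" using assms by (simp add: mult_left_mono)
  finally show ?thesis by (simp add: algebra_simps)
qed

lemma pow_bound:
  fixes G :: "real^'n^'n" and v :: "real^'n"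
  assumes nn: "\<forall>i j. 0 \<le> G$i$j" and Gv: "\<forall>i. (G *v v)$i \<le> lam * v$i"
    and lam: "lam \<ge> 0" and lo: "\<forall>i. vlo \<le> v$i" "vlo > 0" and hi: "\<forall>i. v$i \<le> vhi"
  shows "spec_norm (matpow G k) \<le> (real CARD('n) * vhi / vlo) * lam^k"
proof -
  have comp: "\<forall>i. \<bar>(matpow G k *v x)$i\<bar> \<le> lam^k * (norm x / vlo) * v$i" for x
  proof (induction k)
    case 0
    show ?case
    proof
      fix i
      have "\<bar>x$i\<bar> \<le> norm x" by (rule component_le_norm_cart)
      also have "norm x = (norm x / vlo) * vlo" using lo by simp
      also have "\<dots> \<le> (norm x / vlo) * v$i" using lo by (intro mult_left_mono) auto
      finally show "\<bar>(matpow G 0 *v x)$i\<bar> \<le> lam^0 * (norm x / vlo) * v$i" by simp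
    qed
  next
    case (Suc k)
    have m0: "lam^k * (norm x / vlo) \<ge> 0" using lam lo by simp
    show ?case
    proof
      fix i
      have "matpow G (Suc k) *v x = G *v (matpow G k *v x)" by (simp add: matrix_vector_mul_assoc)
      moreover have "\<bar>(G *v (matpow G k *v x))$i\<bar> \<le> lam * (lam^k * (norm x / vlo)) * v$i"
        by (rule step_bound[OF nn Gv]) (use Suc m0 in auto)
      ultimately show "\<bar>(matpow G (Suc k) *v x)$i\<bar> \<le> lam^Suc k * (norm x / vlo) * v$i" by simp
    qed
  qed
  show ?thesis unfolding spec_norm_def
  proof (rule onorm_le)
    fix x
    have "norm (matpow G k *v x) \<le> (\<Sum>i\<in>UNIV. \<bar>(matpow G k *v x)$i\<bar>)" by (rule norm_le_l1_cart)
    also have "\<dots> \<le> (\<Sum>i\<in>(UNIV::'n set). lam^k * (norm x / vlo) * vhi)"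
      apply (rule sum_mono)
      using comp[of x] hi lam lo
      by (meson order_trans mult_left_mono zero_le_divide_iff norm_ge_zero less_imp_le zero_le_power mult_nonneg_nonneg)
    also have "\<dots> = (real CARD('n) * vhi / vlo) * lam^k * norm x" by simp
    finally show "norm (matpow G k *v x) \<le> (real CARD('n) * vhi / vlo) * lam^k * norm x" .
  qed
qed

lemma norm3: "norm (vector [a, b, c] :: real^3) = sqrt (a^2 + b^2 + c^2)"
  by (simp add: norm_vec_def L2_set_def sum_3)

lemma H_norm:
  fixes a b t :: real
  assumes "t \<ge> 0"
  defines "H \<equiv> vector [vector [0,0,0], vector [a * t, 0, 0], vector [b * t, 0, 0]] :: real^3^3"
  shows "spec_norm H = t * sqrt (a^2 + b^2)"
proof -
  have Hx: "H *v x = x$1 *\<^sub>R vector [0, a*t, b*t]" for x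
    by (simp add: H_def vec_eq_iff forall_3 matrix_vector_mult_def sum_3)
  have nv: "norm (vector [0, a*t, b*t] :: real^3) = t * sqrt (a^2 + b^2)"
  proof -
    have "(0::real)^2 + (a*t)^2 + (b*t)^2 = t^2 * (a^2+b^2)" by (simp add: power_mult_distrib algebra_simps)
    then show ?thesis unfolding norm3 using assms(1) by (simp add: real_sqrt_mult)
  qed
  show ?thesis unfolding spec_norm_def
  proof (rule antisym)
    show "onorm ((*v) H) \<le> t * sqrt (a^2 + b^2)"
    proof (rule onorm_le)
      fix x :: "real^3"
      have "norm (H *v x) = \<bar>x$1\<bar> * (t * sqrt (a^2 + b^2))" by (simp add: Hx nv)
      also have "\<dots> \<le> norm x * (t * sqrt (a^2 + b^2))"
        using assms by (intro mult_right_mono component_le_norm_cart) auto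
      finally show "norm (H *v x) \<le> t * sqrt (a^2 + b^2) * norm x" by (simp add: algebra_simps)
    qed
    have "norm (H *v axis 1 1) \<le> onorm ((*v) H) * norm (axis 1 1 :: real^3)"
      by (rule onorm) simp
    then show "t * sqrt (a^2 + b^2) \<le> onorm ((*v) H)"
      by (simp add: Hx nv)
  qed
qed
lemma gmat_entries:
  "Gmat n \<alpha> l s \<sigma> \<tau> \<epsilon> y ym c d $ 1 $ 1 = \<sigma>"
  "Gmat n \<alpha> l s \<sigma> \<tau> \<epsilon> y ym c d $ 1 $ 2 = 0"
  "Gmat n \<alpha> l s \<sigma> \<tau> \<epsilon> y ym c d $ 1 $ 3 = \<alpha>"
  "Gmat n \<alpha> l s \<sigma> \<tau> \<epsilon> y ym c d $ 2 $ 1 = \<alpha> * c * l * ym"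
  "Gmat n \<alpha> l s \<sigma> \<tau> \<epsilon> y ym c d $ 2 $ 2 = eta_const n \<alpha> l s"
  "Gmat n \<alpha> l s \<sigma> \<tau> \<epsilon> y ym c d $ 2 $ 3 = 0"
  "Gmat n \<alpha> l s \<sigma> \<tau> \<epsilon> y ym c d $ 3 $ 1 = c * d * \<epsilon> * l * ym * (\<tau> + \<alpha> * l * y * ym)"
  "Gmat n \<alpha> l s \<sigma> \<tau> \<epsilon> y ym c d $ 3 $ 2 = \<alpha> * d * \<epsilon> * l^2 * y * ym"
  "Gmat n \<alpha> l s \<sigma> \<tau> \<epsilon> y ym c d $ 3 $ 3 = \<sigma> + \<alpha> * c * d * \<epsilon> * l * ym"
  by (simp_all add: Gmat_def)

lemma nn3: fixes G :: "real^3^3"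
  assumes "0 \<le> G$1$1" "0 \<le> G$1$2" "0 \<le> G$1$3" "0 \<le> G$2$1" "0 \<le> G$2$2" "0 \<le> G$2$3"
   "0 \<le> G$3$1" "0 \<le> G$3$2" "0 \<le> G$3$3"
  shows "\<forall>i j. 0 \<le> G$i$j"
  using assms unfolding forall_3 by blast
theorem lemma5:
  fixes n :: nat
    and f :: "nat \<Rightarrow> 'p::euclidean_space \<Rightarrow> real"
    and gf :: "nat \<Rightarrow> 'p \<Rightarrow> 'p"
    and l s \<sigma> \<tau> \<epsilon> y ym \<gamma>1 T c d \<alpha> :: real
  assumes n_pos: "n \<ge> 1"
    and l_pos: "l > 0" and s_pos: "s > 0"
    and grad: "\<forall>i\<in>{1..n}. \<forall>z. (f i has_derivative (\<lambda>h. gf i z \<bullet> h)) (at z)"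
    and lip: "\<forall>i\<in>{1..n}. \<forall>z1 z2. norm (gf i z1 - gf i z2) \<le> l * norm (z1 - z2)"
    and sconv: "\<forall>i\<in>{1..n}. \<forall>z1 z2.
                  f i z1 - f i z2 \<le> gf i z1 \<bullet> (z1 - z2) - s / 2 * (norm (z1 - z2))^2"
    and sigma: "0 \<le> \<sigma>" "\<sigma> < 1"
    and tau: "\<tau> \<ge> 0" and eps: "\<epsilon> \<ge> 0"
    and y_pos: "y > 0" and ym_pos: "ym > 0"
    and gamma1: "0 < \<gamma>1" "\<gamma>1 < 1" and T_pos: "T > 0"
    and cd_pos: "c > 0" "d > 0"
    and alpha: "0 < \<alpha>" "\<alpha> < alpha_bar n l s \<sigma> \<tau> \<epsilon> y ym c d"
  shows "let \<Gamma>1 = (1 / \<gamma>1) * sqrt ((\<alpha> * l * ym * T)^2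
                         + (\<alpha> * y * l + 2)^2 * (d * \<epsilon> * l * ym^2 * T)^2);
             G = Gmat n \<alpha> l s \<sigma> \<tau> \<epsilon> y ym c d;
             H = Hmat \<alpha> l y ym \<epsilon> d T \<gamma>1
         in 0 < \<Gamma>1
          \<and> (\<forall>k. spec_norm (H k) = \<Gamma>1 * \<gamma>1^k)
          \<and> (\<exists>\<gamma>2 \<Gamma>2. 0 < \<gamma>2 \<and> \<gamma>2 < 1 \<and> 0 < \<Gamma>2
                \<and> (\<forall>k. spec_norm (matpow G k) \<le> \<Gamma>2 * \<gamma>2^k)
                \<and> (let \<gamma> = max \<gamma>1 \<gamma>2; \<Gamma> = \<Gamma>1 * \<Gamma>2 / \<gamma>
                   in \<forall>k r. r + 1 \<le> k \<longrightarrow>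
                        spec_norm (matpow G (k - r - 1) ** H r) \<le> \<Gamma> * \<gamma>^k))"
proof -
  define A where "A = 1 - \<sigma>"
  define N where "N = real n * s"
  define e where "e = c*d*\<epsilon>*l*ym"
  define q where "q = c * d * \<epsilon> * l^2 * y * ym^2 * (l + real n * s)"
  define \<Delta> where "\<Delta> = Delta_const n s c d \<epsilon> l ym \<sigma> \<tau>"
  have A0: "A > 0" using sigma by (simp add: A_def)
  have npos: "real n > 0" using n_pos by simp
  have N0: "N > 0" using npos s_pos by (simp add: N_def)
  have sl: "s \<le> l"
  proof -
    obtain z :: 'p where z: "z \<noteq> 0" using nonzero_Basis nonempty_Basis by blast
    have i1: "(1::nat) \<in> {1..n}" using n_pos by simp
    have h1: "f 1 z - f 1 0 \<le> gf 1 z \<bullet> (z - 0) - s / 2 * (norm (z - 0))^2" using sconv i1 by blast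
    have h2: "f 1 0 - f 1 z \<le> gf 1 0 \<bullet> (0 - z) - s / 2 * (norm (0 - z))^2" using sconv i1 by blast
    have "s * (norm z)^2 \<le> (gf 1 z - gf 1 0) \<bullet> z" using h1 h2 by (simp add: inner_diff_left)
    also have "\<dots> \<le> norm (gf 1 z - gf 1 0) * norm z" by (rule norm_cauchy_schwarz)
    also have "\<dots> \<le> l * norm (z - 0) * norm z"
      using lip i1 by (intro mult_right_mono) (blast, simp)
    finally have "s * (norm z)^2 \<le> l * (norm z)^2" by (simp add: power2_eq_square)
    then show ?thesis using z by simp
  qed
  have abar: "alpha_bar n l s \<sigma> \<tau> \<epsilon> y ym c d = min ((sqrt (\<Delta>^2 + 4 * real n * s * (1 - \<sigma>)^2 * q) - \<Delta>) / (2 * q)) (1 / (real n * l))"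
    unfolding alpha_bar_def Let_def q_def \<Delta>_def ..
  have anl: "real n * \<alpha> * l < 1"
  proof -
    have "\<alpha> < 1 / (real n * l)" using alpha abar by simp
    then show ?thesis using npos l_pos by (simp add: field_simps)
  qed
  have ep: "\<epsilon> > 0"
  proof (rule ccontr)
    assume "\<not> \<epsilon> > 0"
    then have "\<epsilon> = 0" using eps by simp
    then have "q = 0" by (simp add: q_def)
    then show False using alpha abar by simp
  qed
  have q0: "q > 0" unfolding q_def
    by (intro mult_pos_pos add_pos_pos zero_less_power) (use ep cd_pos l_pos y_pos ym_pos npos s_pos in auto)
  have D0: "\<Delta> \<ge> 0" unfolding \<Delta>_def Delta_const_def
    by (intro mult_nonneg_nonneg add_nonneg_nonneg) (use ep cd_pos l_pos y_pos ym_pos npos s_pos sigma tau in auto)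
  have quad: "q*\<alpha>^2 + \<Delta>*\<alpha> < real n * s * (1-\<sigma>)^2"
  proof -
    have "\<alpha> < (sqrt (\<Delta>^2 + 4 * real n * s * (1 - \<sigma>)^2 * q) - \<Delta>) / (2 * q)" using alpha abar by simp
    then have lt: "2*q*\<alpha> + \<Delta> < sqrt (\<Delta>^2 + 4 * real n * s * (1 - \<sigma>)^2 * q)" using q0 by (simp add: field_simps)
    have "(2*q*\<alpha> + \<Delta>)^2 < (sqrt (\<Delta>^2 + 4 * real n * s * (1 - \<sigma>)^2 * q))^2"
      by (rule power_strict_mono[OF lt]) (use q0 alpha D0 in auto)
    also have "\<dots> = \<Delta>^2 + 4 * real n * s * (1 - \<sigma>)^2 * q" using q0 npos s_pos D0 by simp
    finally have "4*q*(q*\<alpha>^2 + \<Delta>*\<alpha>) < 4*q*(real n * s * (1-\<sigma>)^2)" by (simp add: power2_eq_square algebra_simps)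
    then show ?thesis using q0 by simp
  qed
  have eta: "eta_const n \<alpha> l s = 1 - real n * \<alpha> * s"
  proof -
    have "real n * \<alpha> * s \<le> real n * \<alpha> * l" using sl npos alpha by simp
    moreover have "0 \<le> real n * \<alpha> * s" using npos alpha s_pos by simp
    ultimately show ?thesis unfolding eta_const_def using anl by simp
  qed
  have e0: "e > 0" using ep cd_pos l_pos ym_pos by (simp add: e_def)
  define b where "b = \<alpha>^2*d*\<epsilon>*l^2*y*ym"
  define w0 where "w0 = c*l*ym/N"
  define g where "g = A*(A-\<alpha>*e) - \<alpha>*e*(\<tau>+\<alpha>*l*y*ym) - b*w0"
  have b0: "b > 0" using ep cd_pos l_pos y_pos ym_pos alpha by (simp add: b_def)
  have w00: "w0 > 0" using N0 cd_pos l_pos ym_pos by (simp add: w0_def)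
  have bw00: "b*w0 > 0" using b0 w00 by simp
  have Nbw: "N*(b*w0) = b*(c*l*ym)" using N0 by (simp add: w0_def)
  have Ng: "N*g = N*A^2 - (q*\<alpha>^2 + \<Delta>*\<alpha>)"
  proof -
    have "N*g = N*(A*(A-\<alpha>*e)) - N*(\<alpha>*e*(\<tau>+\<alpha>*l*y*ym)) - b*(c*l*ym)"
      unfolding g_def using Nbw by (simp add: right_diff_distrib)
    also have "\<dots> = N*A^2 - (q*\<alpha>^2 + \<Delta>*\<alpha>)"
      unfolding b_def q_def \<Delta>_def Delta_const_def e_def N_def A_def
      by (simp add: algebra_simps power2_eq_square)
    finally show ?thesis .
  qed
  have g0: "g > 0"
  proof -
    have "N*g > 0" unfolding Ng using quad by (simp add: N_def A_def)
    then show ?thesis using N0 by (simp add: zero_less_mult_iff)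
  qed
  have Ae: "A - \<alpha>*e > 0"
  proof -
    have "\<alpha>*e*(\<tau>+\<alpha>*l*y*ym) \<ge> 0" using alpha e0 tau l_pos y_pos ym_pos by simp
    then have "A*(A-\<alpha>*e) > 0" using g0 bw00 unfolding g_def by linarith
    then show ?thesis using A0 by (simp add: zero_less_mult_iff)
  qed
  define w where "w = w0 + g/(2*b)"
  define x where "x = A/\<alpha> - g/(4*\<alpha>*(A-\<alpha>*e))"
  have w0w: "w > w0" using g0 b0 by (simp add: w_def)
  have wpos: "w > 0" using w0w w00 by simp
  have ax: "\<alpha>*x = A - g/(4*(A-\<alpha>*e))" using alpha Ae by (simp add: x_def field_simps)
  have Aex: "\<alpha>*((A-\<alpha>*e)*x) = A*(A-\<alpha>*e) - g/4" using alpha Ae by (simp add: x_def field_simps)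
  have xpos: "x > 0"
  proof -
    have "\<alpha>*e*(\<tau>+\<alpha>*l*y*ym) \<ge> 0" using alpha e0 tau l_pos y_pos ym_pos by simp
    then have gle: "g < A*(A-\<alpha>*e)" using bw00 unfolding g_def by linarith
    then have "A*(A-\<alpha>*e) - g/4 > 0" using g0 by linarith
    then have "\<alpha>*((A-\<alpha>*e)*x) > 0" using Aex by simp
    then show ?thesis using alpha Ae by (simp add: zero_less_mult_iff)
  qed
  define G where "G = Gmat n \<alpha> l s \<sigma> \<tau> \<epsilon> y ym c d"
  define v where "v = (vector [1, w, x] :: real^3)"
  have Gv1: "(G *v v)$1 = \<sigma> + \<alpha>*x"
    by (simp add: G_def Gmat_def v_def matrix_vector_mult_def sum_3)
  have Gv2: "(G *v v)$2 = \<alpha>*c*l*ym + (1 - real n * \<alpha> * s)*w"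
    by (simp add: G_def Gmat_def v_def matrix_vector_mult_def sum_3 eta)
  have Gv3: "(G *v v)$3 = e*(\<tau>+\<alpha>*l*y*ym) + \<alpha>*d*\<epsilon>*l^2*y*ym*w + (\<sigma>+\<alpha>*e)*x"
    by (simp add: G_def Gmat_def v_def matrix_vector_mult_def sum_3 e_def)
  have v1: "v$1 = 1" and v2: "v$2 = w" and v3: "v$3 = x" by (simp_all add: v_def)
  have r1: "(G *v v)$1 < v$1"
  proof -
    have "g/(4*(A-\<alpha>*e)) > 0" using g0 Ae by simp
    then show ?thesis using ax by (simp add: Gv1 v1 A_def)
  qed
  have r2: "(G *v v)$2 < v$2"
  proof -
    have "c*l*ym < N*w" using w0w N0 by (simp add: w0_def field_simps)
    then have "\<alpha>*(c*l*ym) < \<alpha>*(N*w)" using alpha by simp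
    then show ?thesis by (simp add: Gv2 v2 N_def algebra_simps)
  qed
  have r3: "(G *v v)$3 < v$3"
  proof -
    have bw: "b*w = b*w0 + g/2" using b0 by (simp add: w_def field_simps)
    have "\<alpha>*(e*(\<tau>+\<alpha>*l*y*ym) + \<alpha>*d*\<epsilon>*l^2*y*ym*w) = \<alpha>*e*(\<tau>+\<alpha>*l*y*ym) + b*w"
      by (simp add: b_def power2_eq_square algebra_simps)
    also have "\<dots> = A*(A-\<alpha>*e) - g/2"
    proof -
      have "A*(A-\<alpha>*e) = g + \<alpha>*e*(\<tau>+\<alpha>*l*y*ym) + b*w0" by (simp add: g_def)
      then show ?thesis using bw by linarith
    qed
    also have "\<dots> < \<alpha>*((A-\<alpha>*e)*x)" using Aex g0 by simp
    finally have "e*(\<tau>+\<alpha>*l*y*ym) + \<alpha>*d*\<epsilon>*l^2*y*ym*w < (A-\<alpha>*e)*x" using alpha by simp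
    then show ?thesis by (simp add: Gv3 v3 A_def algebra_simps)
  qed
  have eta0: "0 \<le> 1 - real n * \<alpha> * s"
  proof -
    have "real n * \<alpha> * s \<le> real n * \<alpha> * l" using sl npos alpha by (intro mult_left_mono) auto
    then show ?thesis using anl by linarith
  qed
  have p1: "0 \<le> \<alpha>*c*l*ym" using alpha cd_pos l_pos ym_pos by simp
  have p2: "0 \<le> c*d*\<epsilon>*l*ym*(\<tau>+\<alpha>*l*y*ym)"
    by (intro mult_nonneg_nonneg add_nonneg_nonneg) (use alpha cd_pos l_pos ym_pos eps tau y_pos in auto)
  have p3: "0 \<le> \<alpha>*d*\<epsilon>*l^2*y*ym"
    by (intro mult_nonneg_nonneg) (use alpha cd_pos l_pos ym_pos eps y_pos in auto)
  have p4: "0 \<le> \<sigma> + \<alpha>*c*d*\<epsilon>*l*ym"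
    by (intro add_nonneg_nonneg mult_nonneg_nonneg) (use sigma alpha cd_pos l_pos ym_pos eps in auto)
  have nnG: "\<forall>i j. 0 \<le> G$i$j"
    unfolding G_def
    by (rule nn3; simp only: gmat_entries eta; use p1 p2 p3 p4 eta0 sigma alpha in linarith)
  define lam where "lam = max (1/2) (max ((G*v v)$1) (max ((G*v v)$2 / w) ((G*v v)$3 / x)))"
  have lam1: "lam < 1" using r1 r2 r3 wpos xpos unfolding lam_def v1 v2 v3 by simp
  have lam0: "lam > 0" unfolding lam_def by simp
  have Gvl: "\<forall>i. (G *v v)$i \<le> lam * v$i"
    unfolding forall_3 v1 v2 v3
  proof (intro conjI)
    show "(G *v v)$1 \<le> lam * 1" unfolding lam_def by simp
    have "(G *v v)$2 = ((G *v v)$2 / w) * w" using wpos by simp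
    also have "\<dots> \<le> lam * w" using wpos unfolding lam_def by (intro mult_right_mono) auto
    finally show "(G *v v)$2 \<le> lam * w" .
    have "(G *v v)$3 = ((G *v v)$3 / x) * x" using xpos by simp
    also have "\<dots> \<le> lam * x" using xpos unfolding lam_def by (intro mult_right_mono) auto
    finally show "(G *v v)$3 \<le> lam * x" .
  qed
  define vlo where "vlo = min 1 (min w x)"
  define vhi where "vhi = max 1 (max w x)"
  have vlo0: "vlo > 0" using wpos xpos by (simp add: vlo_def)
  have vlo: "\<forall>i. vlo \<le> v$i" unfolding forall_3 v1 v2 v3 vlo_def by (simp add: min_def)
  have vhi: "\<forall>i. v$i \<le> vhi" unfolding forall_3 v1 v2 v3 vhi_def by (simp add: max_def)
  define \<Gamma>2 where "\<Gamma>2 = real CARD(3) * vhi / vlo"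
  have vhi1: "vhi \<ge> 1" by (simp add: vhi_def)
  have G20: "\<Gamma>2 > 0" using vlo0 vhi1 unfolding \<Gamma>2_def by simp
  have pb: "\<forall>k. spec_norm (matpow G k) \<le> \<Gamma>2 * lam^k"
    unfolding \<Gamma>2_def using pow_bound[OF nnG Gvl _ vlo vlo0 vhi] lam0 by auto
  define H where "H = Hmat \<alpha> l y ym \<epsilon> d T \<gamma>1"
  define a1 where "a1 = \<alpha> * l * ym * T"
  define b1 where "b1 = (\<alpha> * l * y + 2) * d * \<epsilon> * l * ym^2 * T"
  define \<Gamma>1 where "\<Gamma>1 = (1 / \<gamma>1) * sqrt ((\<alpha> * l * ym * T)^2
                         + (\<alpha> * y * l + 2)^2 * (d * \<epsilon> * l * ym^2 * T)^2)"
  have G1: "\<Gamma>1 = (1/\<gamma>1) * sqrt (a1^2 + b1^2)"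
  proof -
    have "b1 = (\<alpha> * y * l + 2) * (d * \<epsilon> * l * ym^2 * T)"
      unfolding b1_def by (simp add: algebra_simps)
    then have "b1^2 = (\<alpha> * y * l + 2)^2 * (d * \<epsilon> * l * ym^2 * T)^2" by (simp only: power_mult_distrib)
    then show ?thesis unfolding \<Gamma>1_def a1_def by simp
  qed
  have a10: "a1 > 0" unfolding a1_def using alpha l_pos ym_pos T_pos by simp
  have G10: "\<Gamma>1 > 0"
  proof -
    have "a1^2 + b1^2 > 0" using a10 by (simp add: add_pos_nonneg)
    then show ?thesis unfolding G1 using gamma1 by simp
  qed
  have Hk: "spec_norm (H k) = \<Gamma>1 * \<gamma>1^k" for k
  proof -
    have "H k = vector [vector [0,0,0], vector [a1 * (\<gamma>1^k/\<gamma>1), 0, 0], vector [b1 * (\<gamma>1^k/\<gamma>1), 0, 0]]"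
      unfolding H_def Hmat_def a1_def b1_def by (simp only: mult.assoc)
    then have "spec_norm (H k) = (\<gamma>1^k/\<gamma>1) * sqrt (a1^2 + b1^2)"
      using H_norm[of "\<gamma>1^k/\<gamma>1" a1 b1] gamma1 by simp
    then show ?thesis unfolding G1 by simp
  qed
  have partc: "spec_norm (matpow G (k - r - 1) ** H r) \<le> (\<Gamma>1 * \<Gamma>2 / max \<gamma>1 lam) * (max \<gamma>1 lam)^k"
    if rk: "r + 1 \<le> k" for k r
  proof -
    define m where "m = k - r - 1"
    define gm where "gm = max \<gamma>1 lam"
    have gm0: "gm > 0" using gamma1 by (simp add: gm_def)
    have km: "k = Suc (m + r)" using rk by (simp add: m_def)
    have "spec_norm (matpow G m ** H r) \<le> spec_norm (matpow G m) * spec_norm (H r)" by (rule spec_norm_mult)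
    also have "\<dots> \<le> (\<Gamma>2 * lam^m) * (\<Gamma>1 * \<gamma>1^r)"
      unfolding Hk using pb G10 gamma1 by (intro mult_right_mono) auto
    also have "\<dots> \<le> (\<Gamma>2 * gm^m) * (\<Gamma>1 * gm^r)"
      using G10 G20 gamma1 lam0 unfolding gm_def
      by (intro mult_mono mult_left_mono power_mono) auto
    also have "\<dots> = (\<Gamma>1 * \<Gamma>2 / gm) * gm^k" using gm0 unfolding km by (simp add: power_add field_simps)
    finally show ?thesis unfolding m_def gm_def .
  qed
  have ex: "\<exists>\<gamma>2 \<Gamma>2. 0 < \<gamma>2 \<and> \<gamma>2 < 1 \<and> 0 < \<Gamma>2 \<and> (\<forall>k. spec_norm (matpow G k) \<le> \<Gamma>2 * \<gamma>2^k)
     \<and> (\<forall>k r. r + 1 \<le> k \<longrightarrow> spec_norm (matpow G (k - r - 1) ** H r) \<le> (\<Gamma>1 * \<Gamma>2 / max \<gamma>1 \<gamma>2) * (max \<gamma>1 \<gamma>2)^k)"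
    apply (rule exI[of _ lam], rule exI[of _ \<Gamma>2])
    using lam0 lam1 G20 pb partc by auto
  show ?thesis
    unfolding Let_def G_def[symmetric] H_def[symmetric] \<Gamma>1_def[symmetric]
    using G10 Hk ex by auto
qed
end
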